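(* Let $G=(V,E)$ be a finite, connected, undirected graph with $n\ge 2$ vertices. Then for every $r>0$, $f_{G,r}\le 1-\frac{1}{n+r}$.
   Context: The Moran process on $G$ with mutant fitness $r>0$ is the Markov chain $(X_i)_{i\ge0}$ whose state $X_i\subseteq V$ is the set of vertices occupied by mutants; every other vertex is occupied by a non-mutant of fitness $1$. Write $W(S)=r|S|+|V\setminus S|$ for the total fitness. Given $X_i=S$, one step is: choose a vertex $x$ with probability $r/W(S)$ if $x\in S$ and $1/W(S)$ if $x\notin S$; then choose a neighbour $y$ of $x$ uniformly at random; set $X_{i+1}=S\cup\{y\}$ if $x\in S$ and $X_{i+1}=S\setminus\{y\}$ if $x\notin S$. Fixation means $X_i=V$ for some $i$. For $x\in V$, $f_{G,r}(x)$ is the probability of fixation when $X_0=\{x\}$, and $f_{G,r}=\frac1n\sum_{x\in V}f_{G,r}(x)$ is the fixation probability when the initial single mutant is placed at a uniformly random vertex. *)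

theory Defs
  imports Complex_Main
begin

definition ugraph :: "'a set \<Rightarrow> ('a \<Rightarrow> 'a \<Rightarrow> bool) \<Rightarrow> bool" where
  "ugraph V E \<longleftrightarrow> finite V \<and> (\<forall>x y. E x y \<longrightarrow> x \<in> V \<and> y \<in> V)
     \<and> (\<forall>x y. E x y \<longrightarrow> E y x) \<and> (\<forall>x. \<not> E x x)"

definition connected_graph :: "'a set \<Rightarrow> ('a \<Rightarrow> 'a \<Rightarrow> bool) \<Rightarrow> bool" where
  "connected_graph V E \<longleftrightarrow>
     (\<forall>x\<in>V. \<forall>y\<in>V. (x, y) \<in> {(a, b). a \<in> V \<and> b \<in> V \<and> E a b}\<^sup>*)"

definition nbrs :: "'a set \<Rightarrow> ('a \<Rightarrow> 'a \<Rightarrow> bool) \<Rightarrow> 'a \<Rightarrow> 'a set" where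
  "nbrs V E x = {y \<in> V. E x y}"

definition moran_W :: "'a set \<Rightarrow> real \<Rightarrow> 'a set \<Rightarrow> real" where
  "moran_W V r S = r * real (card S) + real (card (V - S))"

text \<open>One-step transition probability of the Moran process from state S to state T:
choose x with probability r/W(S) (x in S) or 1/W(S) (x not in S), then a uniformly
random neighbour y of x; the new state is S \<union> {y} or S - {y} respectively.\<close>
definition moran_P :: "'a set \<Rightarrow> ('a \<Rightarrow> 'a \<Rightarrow> bool) \<Rightarrow> real \<Rightarrow> 'a set \<Rightarrow> 'a set \<Rightarrow> real" where
  "moran_P V E r S T =
     (\<Sum>x\<in>S. \<Sum>y\<in>nbrs V E x.
        if insert y S = T then r / moran_W V r S / real (card (nbrs V E x)) else 0)
   + (\<Sum>x\<in>V - S. \<Sum>y\<in>nbrs V E x.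
        if S - {y} = T then 1 / moran_W V r S / real (card (nbrs V E x)) else 0)"

primrec moran_Pk :: "'a set \<Rightarrow> ('a \<Rightarrow> 'a \<Rightarrow> bool) \<Rightarrow> real \<Rightarrow> nat \<Rightarrow> 'a set \<Rightarrow> 'a set \<Rightarrow> real" where
  "moran_Pk V E r 0 S T = (if S = T then 1 else 0)"
| "moran_Pk V E r (Suc k) S T = (\<Sum>U\<in>Pow V. moran_P V E r S U * moran_Pk V E r k U T)"

text \<open>Fixation probability from a single mutant at x: since V is absorbing,
P(X_i = V for some i) = lim_k P(X_k = V).\<close>
definition fix_prob_vertex :: "'a set \<Rightarrow> ('a \<Rightarrow> 'a \<Rightarrow> bool) \<Rightarrow> real \<Rightarrow> 'a \<Rightarrow> real" where
  "fix_prob_vertex V E r x = lim (\<lambda>k. moran_Pk V E r k {x} V)"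

definition fix_prob :: "'a set \<Rightarrow> ('a \<Rightarrow> 'a \<Rightarrow> bool) \<Rightarrow> real \<Rightarrow> real" where
  "fix_prob V E r = (\<Sum>x\<in>V. fix_prob_vertex V E r x) / real (card V)"

end

theory Submission
  imports Defs
begin

lemma W_nonneg: "r > 0 \<Longrightarrow> 0 \<le> moran_W V r S"
  unfolding moran_W_def by simp

lemma P_nonneg: "r > 0 \<Longrightarrow> 0 \<le> moran_P V E r S T"
  unfolding moran_P_def using W_nonneg[of r V S]
  by (intro add_nonneg_nonneg sum_nonneg) auto

lemma nbrs_sub: "nbrs V E x \<subseteq> V" unfolding nbrs_def by auto

lemma swap3: "(\<Sum>U\<in>A. \<Sum>x\<in>B. \<Sum>y\<in>C x. f x y U) = (\<Sum>x\<in>B. \<Sum>y\<in>C x. \<Sum>U\<in>A. f x y U)"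
  apply (rule trans[OF sum.swap])
  apply (rule sum.cong[OF refl])
  apply (rule sum.swap)
  done

lemma rowsum:
  assumes fin: "finite V" and S: "S \<subseteq> V" and r: "r > 0"
  shows "(\<Sum>U\<in>Pow V. moran_P V E r S U) \<le> 1"
proof -
  define W where "W = moran_W V r S"
  have W0: "W \<ge> 0" using W_nonneg[OF r] W_def by simp
  have "(\<Sum>U\<in>Pow V. moran_P V E r S U) =
     (\<Sum>x\<in>S. \<Sum>y\<in>nbrs V E x. \<Sum>U\<in>Pow V. if insert y S = U then r / W / real (card (nbrs V E x)) else 0)
   + (\<Sum>x\<in>V - S. \<Sum>y\<in>nbrs V E x. \<Sum>U\<in>Pow V. if S - {y} = U then 1 / W / real (card (nbrs V E x)) else 0)"
    unfolding moran_P_def W_def[symmetric] sum.distrib swap3 ..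
  also have "\<dots> = (\<Sum>x\<in>S. \<Sum>y\<in>nbrs V E x. r / W / real (card (nbrs V E x)))
     + (\<Sum>x\<in>V - S. \<Sum>y\<in>nbrs V E x. 1 / W / real (card (nbrs V E x)))"
    using fin S nbrs_sub[of V E] by (auto simp only: sum.delta' intro!: sum.cong arg_cong2[where f="(+)"]) auto
  also have "\<dots> \<le> (\<Sum>x\<in>S. r / W) + (\<Sum>x\<in>V - S. 1 / W)"
    using r W0 by (intro add_mono sum_mono) (auto simp: field_simps)
  also have "\<dots> = (r * card S + card (V - S)) / W"
    by (simp add: add_divide_distrib)
  also have "\<dots> \<le> 1" unfolding W_def moran_W_def by simp
  finally show ?thesis .
qed

lemma Pk_bounds:
  assumes fin: "finite V" and r: "r > 0"
  shows "S \<subseteq> V \<Longrightarrow> 0 \<le> moran_Pk V E r k S V \<and> moran_Pk V E r k S V \<le> 1"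
proof (induction k arbitrary: S)
  case 0 then show ?case by simp
next
  case (Suc k)
  have "moran_Pk V E r (Suc k) S V \<le> (\<Sum>U\<in>Pow V. moran_P V E r S U)"
    unfolding moran_Pk.simps
    by (intro sum_mono mult_right_le_one_le P_nonneg r) (use Suc.IH in auto)
  also have "\<dots> \<le> 1" using rowsum[OF fin Suc.prems r] .
  finally have "moran_Pk V E r (Suc k) S V \<le> 1" .
  moreover have "0 \<le> moran_Pk V E r (Suc k) S V"
    unfolding moran_Pk.simps
    by (intro sum_nonneg mult_nonneg_nonneg P_nonneg r) (use Suc.IH in auto)
  ultimately show ?case by simp
qed

lemma P_empty: "U \<noteq> {} \<Longrightarrow> moran_P V E r {} U = 0"
  unfolding moran_P_def by simp

lemma Pk_empty:
  assumes "V \<noteq> {}"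
  shows "moran_Pk V E r k {} V = 0"
proof (induction k)
  case 0 then show ?case using assms by simp
next
  case (Suc k)
  show ?case unfolding moran_Pk.simps
    by (rule sum.neutral) (metis P_empty Suc.IH mult_zero_left mult_zero_right)
qed

lemma deg_pos:
  assumes g: "ugraph V E" and c: "connected_graph V E" and n: "card V \<ge> 2" and x: "x \<in> V"
  shows "card (nbrs V E x) > 0"
proof -
  have fin: "finite V" using g unfolding ugraph_def by simp
  obtain y where y: "y \<in> V" "y \<noteq> x"
  proof -
    have "\<not> V \<subseteq> {x}" using n card_mono[of "{x}" V] by force
    then show ?thesis using that by blast
  qed
  have "(x, y) \<in> {(a, b). a \<in> V \<and> b \<in> V \<and> E a b}\<^sup>*"
    using c x y unfolding connected_graph_def by blast
  then obtain z where "z \<in> V" "E x z"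
    using y(2) by (cases rule: converse_rtranclE) auto
  then have "z \<in> nbrs V E x" unfolding nbrs_def by simp
  moreover have "finite (nbrs V E x)" using fin nbrs_sub finite_subset by metis
  ultimately show ?thesis by (auto simp: card_gt_0_iff)
qed

lemma P_VV:
  assumes g: "ugraph V E" and c: "connected_graph V E" and n: "card V \<ge> 2" and r: "r > 0"
  shows "moran_P V E r V V = 1"
proof -
  have fin: "finite V" using g unfolding ugraph_def by simp
  have W: "moran_W V r V = r * card V" unfolding moran_W_def by simp
  have "moran_P V E r V V = (\<Sum>x\<in>V. \<Sum>y\<in>nbrs V E x. r / (r * card V) / real (card (nbrs V E x)))"
  proof -
    have "moran_P V E r V V = (\<Sum>x\<in>V. \<Sum>y\<in>nbrs V E x. if insert y V = V then r / moran_W V r V / real (card (nbrs V E x)) else 0)"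
      unfolding moran_P_def by (simp only: Diff_cancel sum.empty add_0_right)
    also have "\<dots> = (\<Sum>x\<in>V. \<Sum>y\<in>nbrs V E x. r / (r * card V) / real (card (nbrs V E x)))"
      by (intro sum.cong refl) (use nbrs_sub[of V E] in \<open>auto simp: W insert_absorb\<close>)
    finally show ?thesis .
  qed
  also have "\<dots> = (\<Sum>x\<in>V. 1 / card V)"
    using deg_pos[OF g c n] r by (intro sum.cong) auto
  also have "\<dots> = 1" using n by simp
  finally show ?thesis .
qed

lemma Pk_mono:
  assumes g: "ugraph V E" and c: "connected_graph V E" and n: "card V \<ge> 2" and r: "r > 0"
  shows "S \<subseteq> V \<Longrightarrow> moran_Pk V E r k S V \<le> moran_Pk V E r (Suc k) S V"
proof (induction k arbitrary: S)
  have fin: "finite V" using g unfolding ugraph_def by simp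
  case 0
  show ?case
  proof (cases "S = V")
    case True
    have "moran_Pk V E r (Suc 0) S V = moran_P V E r V V"
    proof -
      have eq: "(\<lambda>U. moran_P V E r V U * (if U = V then 1 else 0)) = (\<lambda>U. if U = V then moran_P V E r V U else 0)"
        by auto
      show ?thesis unfolding True moran_Pk.simps eq using fin by (simp add: sum.delta[of "Pow V" V])
    qed
    then show ?thesis using P_VV[OF g c n r] True by simp
  next
    case False
    have "0 \<le> moran_Pk V E r (Suc 0) S V" using Pk_bounds[OF fin r "0.prems", where k="Suc 0" and E=E] by simp
    then show ?thesis using False by simp
  qed
next
  case (Suc k)
  show ?case unfolding moran_Pk.simps(2)[of V E r "Suc k"] moran_Pk.simps(2)[of V E r k]
    by (intro sum_mono mult_left_mono P_nonneg r) (use Suc.IH in auto)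
qed

lemma Pk_upper:
  assumes g: "ugraph V E" and n: "card V \<ge> 2" and r: "r > 0" and x: "x \<in> V"
  shows "moran_Pk V E r k {x} V \<le> 1 - moran_P V E r {x} {}"
proof -
  have fin: "finite V" using g unfolding ugraph_def by simp
  have xV: "{x} \<subseteq> V" using x by simp
  have rs: "(\<Sum>U\<in>Pow V. moran_P V E r {x} U) \<le> 1" using rowsum[OF fin xV r] .
  have split: "(\<Sum>U\<in>Pow V. moran_P V E r {x} U) =
      (\<Sum>U\<in>Pow V. if U = {} then 0 else moran_P V E r {x} U) + moran_P V E r {x} {}"
  proof -
    have "(\<lambda>U. moran_P V E r {x} U) = (\<lambda>U. (if U = {} then 0 else moran_P V E r {x} U) + (if U = {} then moran_P V E r {x} U else 0))"
      by auto
    then have "(\<Sum>U\<in>Pow V. moran_P V E r {x} U) = (\<Sum>U\<in>Pow V. (if U = {} then 0 else moran_P V E r {x} U) + (if U = {} then moran_P V E r {x} U else 0))"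
      by metis
    also have "\<dots> = (\<Sum>U\<in>Pow V. if U = {} then 0 else moran_P V E r {x} U) + moran_P V E r {x} {}"
      unfolding sum.distrib using fin by (simp add: sum.delta)
    finally show ?thesis .
  qed
  have nn: "0 \<le> (\<Sum>U\<in>Pow V. if U = {} then 0 else moran_P V E r {x} U)"
    by (intro sum_nonneg) (auto intro: P_nonneg r)
  show ?thesis
  proof (cases k)
    case 0
    have "{x} \<noteq> V" using n by auto
    then show ?thesis using 0 split rs nn by simp
  next
    case (Suc j)
    have Vne: "V \<noteq> {}" using x by auto
    have "moran_Pk V E r k {x} V \<le> (\<Sum>U\<in>Pow V. if U = {} then 0 else moran_P V E r {x} U)"
      unfolding Suc moran_Pk.simps
    proof (intro sum_mono)
      fix U assume U: "U \<in> Pow V"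
      show "moran_P V E r {x} U * moran_Pk V E r j U V \<le> (if U = {} then 0 else moran_P V E r {x} U)"
      proof (cases "U = {}")
        case True then show ?thesis using Pk_empty[OF Vne] by simp
      next
        case False then show ?thesis
          using Pk_bounds[OF fin r, of U E j] U P_nonneg[OF r, of V E "{x}" U]
          by (simp add: mult_right_le_one_le)
      qed
    qed
    then show ?thesis using split rs by simp
  qed
qed

lemma fix_vertex_le:
  assumes g: "ugraph V E" and c: "connected_graph V E" and n: "card V \<ge> 2" and r: "r > 0" and x: "x \<in> V"
  shows "fix_prob_vertex V E r x \<le> 1 - moran_P V E r {x} {}"
proof -
  have xV: "{x} \<subseteq> V" using x by simp
  have inc: "incseq (\<lambda>k. moran_Pk V E r k {x} V)"
    by (rule incseq_SucI) (use Pk_mono[OF g c n r xV] in simp)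
  obtain L where L: "(\<lambda>k. moran_Pk V E r k {x} V) \<longlonglongrightarrow> L"
    using incseq_convergent[OF inc, of "1 - moran_P V E r {x} {}"] Pk_upper[OF g n r x] by blast
  have "L \<le> 1 - moran_P V E r {x} {}"
    by (rule LIMSEQ_le_const2[OF L]) (use Pk_upper[OF g n r x] in simp)
  then show ?thesis unfolding fix_prob_vertex_def using limI[OF L] by simp
qed

lemma e_formula:
  assumes g: "ugraph V E" and x: "x \<in> V"
  shows "moran_P V E r {x} {} =
    (\<Sum>z\<in>V. if x \<in> nbrs V E z then 1 / moran_W V r {x} / real (card (nbrs V E z)) else 0)"
proof -
  have fin: "finite V" using g unfolding ugraph_def by simp
  have irr: "x \<notin> nbrs V E x" using g unfolding ugraph_def nbrs_def by simp
  have finN: "\<And>z. finite (nbrs V E z)" using fin nbrs_sub finite_subset by metis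
  define c where "c z = 1 / moran_W V r {x} / real (card (nbrs V E z))" for z
  have "moran_P V E r {x} {} = (\<Sum>z\<in>V - {x}. \<Sum>y\<in>nbrs V E z. if {x} - {y} = {} then c z else 0)"
    unfolding moran_P_def c_def by simp
  also have "\<dots> = (\<Sum>z\<in>V - {x}. if x \<in> nbrs V E z then c z else 0)"
  proof (intro sum.cong refl)
    fix z
    have "(\<Sum>y\<in>nbrs V E z. if {x} - {y} = {} then c z else 0) = (\<Sum>y\<in>nbrs V E z. if y = x then c z else 0)"
      by (intro sum.cong refl) auto
    also have "\<dots> = (if x \<in> nbrs V E z then c z else 0)" using finN[of z] by (simp add: sum.delta)
    finally show "(\<Sum>y\<in>nbrs V E z. if {x} - {y} = {} then c z else 0) = (if x \<in> nbrs V E z then c z else 0)" .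
  qed
  also have "\<dots> = (\<Sum>z\<in>V. if x \<in> nbrs V E z then c z else 0)"
    using sum.remove[OF fin x, of "\<lambda>z. if x \<in> nbrs V E z then c z else 0"] irr by simp
  finally show ?thesis unfolding c_def .
qed

lemma e_sum:
  fixes r :: real
  assumes g: "ugraph V E" and c: "connected_graph V E" and n: "card V \<ge> 2" and r: "r > 0"
  shows "(\<Sum>x\<in>V. moran_P V E r {x} {}) = real (card V) / (r + real (card V) - 1)"
proof -
  have fin: "finite V" using g unfolding ugraph_def by simp
  define W where "W = r + real (card V) - 1"
  have W: "\<And>x. x \<in> V \<Longrightarrow> moran_W V r {x} = W"
    unfolding moran_W_def W_def using fin n by (simp add: card_Diff_singleton of_nat_diff)
  have "(\<Sum>x\<in>V. moran_P V E r {x} {}) =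
      (\<Sum>x\<in>V. \<Sum>z\<in>V. if x \<in> nbrs V E z then 1 / W / real (card (nbrs V E z)) else 0)"
  proof (intro sum.cong refl)
    fix x assume x: "x \<in> V"
    show "moran_P V E r {x} {} = (\<Sum>z\<in>V. if x \<in> nbrs V E z then 1 / W / real (card (nbrs V E z)) else 0)"
      unfolding e_formula[OF g x] W[OF x] ..
  qed
  also have "\<dots> = (\<Sum>z\<in>V. \<Sum>x\<in>V. if x \<in> nbrs V E z then 1 / W / real (card (nbrs V E z)) else 0)"
    by (rule sum.swap)
  also have "\<dots> = (\<Sum>z\<in>V. real (card (nbrs V E z)) * (1 / W / real (card (nbrs V E z))))"
  proof (intro sum.cong refl)
    fix z
    have "V \<inter> {x. x \<in> nbrs V E z} = nbrs V E z" using nbrs_sub[of V E z] by blast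
    then show "(\<Sum>x\<in>V. if x \<in> nbrs V E z then 1 / W / real (card (nbrs V E z)) else 0) =
        real (card (nbrs V E z)) * (1 / W / real (card (nbrs V E z)))"
      using fin by (simp add: sum.If_cases)
  qed
  also have "\<dots> = (\<Sum>z\<in>V. 1 / W)"
    using deg_pos[OF g c n] by (intro sum.cong refl) simp
  also have "\<dots> = card V / W" by simp
  finally show ?thesis unfolding W_def .
qed

theorem lemma2:
  fixes V :: "'a set" and E :: "'a \<Rightarrow> 'a \<Rightarrow> bool" and r :: real
  assumes "ugraph V E" and "connected_graph V E" and "card V \<ge> 2" and "r > 0"
  shows "fix_prob V E r \<le> 1 - 1 / (real (card V) + r)"
proof -
  note g = assms(1) and c = assms(2) and n = assms(3) and r = assms(4)
  have fin: "finite V" using g unfolding ugraph_def by simp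
  define N where "N = real (card V)"
  have N2: "N \<ge> 2" using n unfolding N_def by simp
  have "(\<Sum>x\<in>V. fix_prob_vertex V E r x) \<le> (\<Sum>x\<in>V. 1 - moran_P V E r {x} {})"
    by (intro sum_mono fix_vertex_le[OF g c n r])
  also have "\<dots> = N - N / (r + N - 1)"
    unfolding sum_subtractf e_sum[OF g c n r] N_def by simp
  finally have s: "(\<Sum>x\<in>V. fix_prob_vertex V E r x) \<le> N - N / (r + N - 1)" .
  have "fix_prob V E r \<le> (N - N / (r + N - 1)) / N"
    unfolding fix_prob_def N_def[symmetric] using s N2 by (simp add: divide_right_mono)
  also have "\<dots> = 1 - 1 / (r + N - 1)" using N2 by (simp add: field_simps)
  also have "\<dots> \<le> 1 - 1 / (N + r)"
    using N2 r by (simp add: frac_le)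
  finally show ?thesis unfolding N_def .
qed

end
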